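(* For every positive integer $\alpha$, there is no function $f$ such that $\mathrm{ecrw}_\alpha(G)\le f(\mathrm{tcw}(G))$ for all graphs $G$. (Indeed, for every $k$ the graph $G^{\alpha+1}_k$ has tree-cut width at most $\alpha+1$, while $\{G^{\alpha+1}_k:k\in\mathbb N\}$ has unbounded $\alpha$-edge-crossing width.)
   Context: For positive integers $n,k$, the graph $G^n_k$ has vertex set $A\cup B_k$ where $A=\{a_1,\dots,a_n\}$ and $B_k=\{(W,\ell): W\subseteq A,\ |W|=2,\ \ell\in[k]\}$, with $a\in A$ adjacent to $(W,\ell)$ iff $a\in W$, and no other edges. A tree-cut decomposition of a graph $G$ is a pair $\mathcal{T}=(T,\{X_t\}_{t\in V(T)})$ where $T$ is a tree and the bags $X_t\subseteq V(G)$ are pairwise disjoint (possibly empty) with $\bigcup_{t\in V(T)}X_t=V(G)$. For a node $t$ of $T$, let $T_1,\dots,T_m$ be the connected components of $T-t$ and $Z_i=\bigcup_{s\in V(T_i)}X_s$; $\mathrm{cross}_{\mathcal{T}}(t)$ is the number of edges of $G$ whose two endpoints lie in two distinct sets among $Z_1,\dots,Z_m$ (if $T$ has one node, $\mathrm{cross}_{\mathcal T}(t)=0$). The crossing number of $\mathcal{T}$ is $\max_{t}\mathrm{cross}_{\mathcal{T}}(t)$, and the thickness of $\mathcal{T}$ is $\max_t|X_t|$. $\mathrm{ecrw}_\alpha(G)$ is the minimum crossing number over tree-cut decompositions of $G$ of thickness at most $\alpha$. For an edge $uv$ of $T$, the adhesion $\mathrm{adh}_{\mathcal T}(uv)$ is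 the set of edges of $G$ joining $\bigcup_{s\in V(T_{uv,u})}X_s$ and $\bigcup_{s\in V(T_{uv,v})}X_s$, where $T_{uv,u},T_{uv,v}$ are the components of $T-uv$ containing $u,v$. The torso $H_t$ at $t$ is $G$ if $|V(T)|=1$, and otherwise is obtained from $G$ by consolidating each $Z_i$ into a single vertex $z_i$ (replace $Z_i$ by $z_i$ and, for each edge between $Z_i$ and $v\notin Z_i$, add an edge $z_iv$; multi-edges allowed). The 3-center $\widetilde{H_t}$ is obtained from $H_t$ by exhaustively suppressing vertices of $V(H_t)\setminus X_t$ of degree at most 2 (suppressing $v$: delete $v$, and if it had degree exactly 2 add an edge between its two neighbours). The tree-cut width of $\mathcal T$ is $\max(\max_{uv\in E(T)}|\mathrm{adh}_{\mathcal T}(uv)|,\max_{t}|V(\widetilde{H_t})|)$, and $\mathrm{tcw}(G)$ is its minimum over all tree-cut decompositions of $G$. *)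

theory Defs
  imports Main "HOL-Library.Multiset"
begin

definition graph :: "nat set \<Rightarrow> nat set set \<Rightarrow> bool" where
  "graph V E \<longleftrightarrow> finite V \<and> (\<forall>e\<in>E. e \<subseteq> V \<and> card e = 2)"

definition tadj :: "nat set set \<Rightarrow> (nat \<times> nat) set" where
  "tadj TE = {(a, b). {a, b} \<in> TE}"

definition is_tree :: "nat set \<Rightarrow> nat set set \<Rightarrow> bool" where
  "is_tree N TE \<longleftrightarrow> finite N \<and> N \<noteq> {} \<and> (\<forall>e\<in>TE. e \<subseteq> N \<and> card e = 2)
     \<and> (\<forall>u\<in>N. \<forall>v\<in>N. (u, v) \<in> (tadj TE)\<^sup>*) \<and> card TE + 1 = card N"

definition conn_avoid :: "nat set set \<Rightarrow> nat \<Rightarrow> nat \<Rightarrow> nat \<Rightarrow> bool" where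
  "conn_avoid TE t a b \<longleftrightarrow> (a, b) \<in> {(x, y). {x, y} \<in> TE \<and> x \<noteq> t \<and> y \<noteq> t}\<^sup>*"

definition conn_avoid_edge :: "nat set set \<Rightarrow> nat set \<Rightarrow> nat \<Rightarrow> nat \<Rightarrow> bool" where
  "conn_avoid_edge TE e a b \<longleftrightarrow> (a, b) \<in> (tadj (TE - {e}))\<^sup>*"

definition tcd :: "nat set \<Rightarrow> nat set set \<Rightarrow> nat set \<Rightarrow> nat set set \<Rightarrow> (nat \<Rightarrow> nat set) \<Rightarrow> bool" where
  "tcd V E N TE X \<longleftrightarrow> is_tree N TE
     \<and> (\<forall>s\<in>N. \<forall>s'\<in>N. s \<noteq> s' \<longrightarrow> X s \<inter> X s' = {})
     \<and> (\<Union>s\<in>N. X s) = V"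

definition node_of :: "nat set \<Rightarrow> (nat \<Rightarrow> nat set) \<Rightarrow> nat \<Rightarrow> nat" where
  "node_of N X v = (THE s. s \<in> N \<and> v \<in> X s)"

definition cross :: "nat set set \<Rightarrow> nat set \<Rightarrow> nat set set \<Rightarrow> (nat \<Rightarrow> nat set) \<Rightarrow> nat \<Rightarrow> nat" where
  "cross E N TE X t = card {e \<in> E. \<exists>u v. e = {u, v} \<and> node_of N X u \<noteq> t \<and> node_of N X v \<noteq> t
        \<and> \<not> conn_avoid TE t (node_of N X u) (node_of N X v)}"

definition crossing_number :: "nat set set \<Rightarrow> nat set \<Rightarrow> nat set set \<Rightarrow> (nat \<Rightarrow> nat set) \<Rightarrow> nat" where
  "crossing_number E N TE X = Max (cross E N TE X ` N)"

definition thickness :: "nat set \<Rightarrow> (nat \<Rightarrow> nat set) \<Rightarrow> nat" where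
  "thickness N X = Max ((\<lambda>s. card (X s)) ` N)"

definition ecrw :: "nat \<Rightarrow> nat set \<Rightarrow> nat set set \<Rightarrow> nat" where
  "ecrw \<alpha> V E = Inf {c. \<exists>N TE X. tcd V E N TE X \<and> thickness N X \<le> \<alpha> \<and> c = crossing_number E N TE X}"

definition adh :: "nat set set \<Rightarrow> nat set \<Rightarrow> nat set set \<Rightarrow> (nat \<Rightarrow> nat set) \<Rightarrow> nat set \<Rightarrow> nat set set" where
  "adh E N TE X e = {g \<in> E. \<exists>x y. g = {x, y} \<and> \<not> conn_avoid_edge TE e (node_of N X x) (node_of N X y)}"

text \<open>Torso at t: vertex Inl x for x in X t, vertex Inr s for the component Z_i of T - t
  containing the neighbour s of t. Multi-edges are kept; edges inside one Z_i disappear.\<close>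
definition tmap :: "nat set \<Rightarrow> nat set set \<Rightarrow> (nat \<Rightarrow> nat set) \<Rightarrow> nat \<Rightarrow> nat \<Rightarrow> nat + nat" where
  "tmap N TE X t x = (if node_of N X x = t then Inl x
     else Inr (THE s. {t, s} \<in> TE \<and> conn_avoid TE t s (node_of N X x)))"

definition torso_V :: "nat set set \<Rightarrow> (nat \<Rightarrow> nat set) \<Rightarrow> nat \<Rightarrow> (nat + nat) set" where
  "torso_V TE X t = Inl ` X t \<union> Inr ` {s. {t, s} \<in> TE}"

definition torso_E :: "nat set set \<Rightarrow> nat set \<Rightarrow> nat set set \<Rightarrow> (nat \<Rightarrow> nat set) \<Rightarrow> nat \<Rightarrow> (nat + nat) set multiset" where
  "torso_E E N TE X t = image_mset (\<lambda>e. tmap N TE X t ` e)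
      (filter_mset (\<lambda>e. card (tmap N TE X t ` e) = 2) (mset_set E))"

text \<open>Multigraphs: edges are sets of card 2 (ordinary) or card 1 (loops); loops count 2 in degree.\<close>
definition mdeg :: "'v set multiset \<Rightarrow> 'v \<Rightarrow> nat" where
  "mdeg M v = sum_mset (image_mset (\<lambda>e. if v \<in> e then (if card e = 1 then 2 else 1) else 0) M)"

definition suppress_step :: "'v set \<Rightarrow> ('v set \<times> 'v set multiset) \<Rightarrow> ('v set \<times> 'v set multiset) \<Rightarrow> bool" where
  "suppress_step P S S' \<longleftrightarrow> (\<exists>v \<in> fst S - P. mdeg (snd S) v \<le> 2
     \<and> fst S' = fst S - {v}
     \<and> snd S' = filter_mset (\<lambda>e. v \<notin> e) (snd S)
         + (if mdeg (snd S) v = 2 \<and> (\<forall>e\<in>#snd S. v \<in> e \<longrightarrow> card e = 2)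
            then {# \<Union>e\<in>set_mset (filter_mset (\<lambda>e. v \<in> e) (snd S)). e - {v} #} else {#}))"

definition center_size :: "'v set \<Rightarrow> ('v set \<times> 'v set multiset) \<Rightarrow> nat" where
  "center_size P S = Max {card (fst S') | S'. (S, S') \<in> {(a, b). suppress_step P a b}\<^sup>*
                                            \<and> \<not> (\<exists>S''. suppress_step P S' S'')}"

definition tcw_width :: "nat set set \<Rightarrow> nat set \<Rightarrow> nat set set \<Rightarrow> (nat \<Rightarrow> nat set) \<Rightarrow> nat" where
  "tcw_width E N TE X = max (Max (insert 0 ((\<lambda>e. card (adh E N TE X e)) ` TE)))
       (Max ((\<lambda>t. center_size (Inl ` X t) (torso_V TE X t, torso_E E N TE X t)) ` N))"

definition tcw :: "nat set \<Rightarrow> nat set set \<Rightarrow> nat" where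
  "tcw V E = Inf {w. \<exists>N TE X. tcd V E N TE X \<and> w = tcw_width E N TE X}"

end

theory Submission
  imports Defs "HOL-Library.Nat_Bijection"
begin


lemma tadj_iff: "(a, b) \<in> tadj F \<longleftrightarrow> {a, b} \<in> F"
  by (simp add: tadj_def)

lemma tadj_sym: "(a, b) \<in> tadj F \<Longrightarrow> (b, a) \<in> tadj F"
  by (simp add: tadj_def insert_commute)

lemma rtrancl_sym_gen:
  assumes "\<And>a b. (a, b) \<in> R \<Longrightarrow> (b, a) \<in> R" and "(x, y) \<in> R\<^sup>*"
  shows "(y, x) \<in> R\<^sup>*"
  using assms(2)
proof (induction rule: rtrancl_induct)
  case base then show ?case by simp
next
  case (step y z)
  then show ?case using assms(1) by (meson converse_rtrancl_into_rtrancl)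
qed

lemma tadj_rt_sym: "(x, y) \<in> (tadj F)\<^sup>* \<Longrightarrow> (y, x) \<in> (tadj F)\<^sup>*"
  by (rule rtrancl_sym_gen[OF tadj_sym])

lemma conn_avoid_sym: "conn_avoid TE t x y \<Longrightarrow> conn_avoid TE t y x"
  unfolding conn_avoid_def
  by (rule rtrancl_sym_gen) (auto simp: insert_commute)

lemma conn_avoid_trans: "conn_avoid TE t x y \<Longrightarrow> conn_avoid TE t y z \<Longrightarrow> conn_avoid TE t x z"
  unfolding conn_avoid_def by (rule rtrancl_trans)

lemma conn_card:
  assumes finN: "finite N" and r: "r \<in> N"
    and conn: "\<forall>v\<in>N. (v, r) \<in> (tadj F)\<^sup>*"
    and sub: "\<forall>e\<in>F. e \<subseteq> N" and finF: "finite F"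
  shows "card N \<le> card F + 1"
proof -
  define R where "R = tadj F"
  define dist where "dist v = (LEAST n. (v, r) \<in> R ^^ n)" for v
  have ex: "\<exists>n. (v, r) \<in> R ^^ n" if "v \<in> N" for v
    using conn that rtrancl_power unfolding R_def by blast
  have dist_in: "(v, r) \<in> R ^^ dist v" if "v \<in> N" for v
    unfolding dist_def using ex[OF that] by (rule LeastI_ex)
  have dist_le: "(v, r) \<in> R ^^ n \<Longrightarrow> dist v \<le> n" for v n
    unfolding dist_def by (rule Least_le)
  have nb: "\<exists>u. (v, u) \<in> R \<and> dist u + 1 = dist v" if "v \<in> N" "v \<noteq> r" for v
  proof -
    have "dist v \<noteq> 0"
    proof
      assume "dist v = 0"
      with dist_in[OF that(1)] have "v = r" by simp
      with that(2) show False by simp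
    qed
    then obtain m where m: "dist v = Suc m" by (cases "dist v") auto
    have "(v, r) \<in> R ^^ Suc m" using dist_in[OF that(1)] m by simp
    then obtain u where u1: "(v, u) \<in> R" and u2: "(u, r) \<in> R ^^ m"
      by (rule relpow_Suc_E2)
    have "dist u \<le> m" using dist_le[OF u2] .
    moreover have "\<not> dist u < m"
    proof
      assume "dist u < m"
      have "{v, u} \<in> F" using u1 unfolding R_def tadj_def by simp
      then have "u \<in> N" using sub by blast
      then have "(v, r) \<in> R ^^ Suc (dist u)"
        by (rule relpow_Suc_I2[OF u1 dist_in])
      then have "dist v \<le> Suc (dist u)" by (rule dist_le)
      with \<open>dist u < m\<close> m show False by simp
    qed
    ultimately show ?thesis using u1 m by auto
  qed
  define h where "h v = (SOME u. (v, u) \<in> R \<and> dist u + 1 = dist v)" for v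
  define g where "g v = {v, h v}" for v
  have gp: "(v, h v) \<in> R \<and> dist (h v) + 1 = dist v" if "v \<in> N - {r}" for v
  proof -
    have "\<exists>u. (v, u) \<in> R \<and> dist u + 1 = dist v" using nb that by auto
    then show ?thesis unfolding h_def by (rule someI_ex)
  qed
  have gF: "g v \<in> F" if "v \<in> N - {r}" for v
    using gp[OF that] unfolding g_def R_def tadj_def by simp
  have inj: "inj_on g (N - {r})"
  proof
    fix v v' assume v: "v \<in> N - {r}" and v': "v' \<in> N - {r}" and eq: "g v = g v'"
    show "v = v'"
    proof (rule ccontr)
      assume ne: "v \<noteq> v'"
      have "{v, h v} = {v', h v'}" using eq unfolding g_def .
      then have e1: "v = h v'" and e2: "h v = v'" using ne unfolding doubleton_eq_iff by blast+
      have "dist (h v) + 1 = dist v" using gp[OF v] by simp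
      moreover have "dist (h v') + 1 = dist v'" using gp[OF v'] by simp
      ultimately show False using e1 e2 by simp
    qed
  qed
  have "card (N - {r}) \<le> card F"
    using card_inj_on_le[OF inj _ finF] gF by blast
  then show ?thesis using r finN by (simp add: card_Diff_singleton)
qed

lemma tree_edge_cut:
  assumes T: "is_tree N TE" and e: "e \<in> TE" and euv: "e = {u, v}"
  shows "(u, v) \<notin> (tadj (TE - {e}))\<^sup>*"
proof
  assume uv: "(u, v) \<in> (tadj (TE - {e}))\<^sup>*"
  have finN: "finite N" and NE: "N \<noteq> {}" and sub: "\<forall>e\<in>TE. e \<subseteq> N \<and> card e = 2"
    and conn: "\<forall>a\<in>N. \<forall>b\<in>N. (a, b) \<in> (tadj TE)\<^sup>*" and cardT: "card TE + 1 = card N"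
    using T unfolding is_tree_def by auto
  have finT: "finite TE"
    using finN sub by (meson Pow_iff finite_Pow_iff rev_finite_subset subsetI)
  have uN: "u \<in> N" using sub e euv by auto
  have sub1: "tadj TE \<subseteq> (tadj (TE - {e}))\<^sup>*"
  proof
    fix p assume p: "p \<in> tadj TE"
    obtain a b where ab: "p = (a, b)" by fastforce
    show "p \<in> (tadj (TE - {e}))\<^sup>*"
    proof (cases "{a, b} = e")
      case True
      then have "(a, b) = (u, v) \<or> (a, b) = (v, u)" using euv by (auto simp: doubleton_eq_iff)
      then show ?thesis using uv tadj_rt_sym ab by auto
    next
      case False
      then show ?thesis using p ab by (auto simp: tadj_def)
    qed
  qed
  have "\<forall>a\<in>N. (a, u) \<in> (tadj (TE - {e}))\<^sup>*"
    using conn uN rtrancl_subset_rtrancl[OF sub1] by blast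
  then have "card N \<le> card (TE - {e}) + 1"
    by (intro conn_card[OF finN uN]) (use sub finT in auto)
  also have "\<dots> = card TE"
  proof -
    have "card TE > 0" using finT e card_gt_0_iff by blast
    then show ?thesis using finT e by (simp add: card_Diff_singleton)
  qed
  finally show False using cardT by simp
qed



lemma avoid_sub:
  assumes "t \<in> e"
  shows "{(x, y). {x, y} \<in> TE \<and> x \<noteq> t \<and> y \<noteq> t} \<subseteq> tadj (TE - {e})"
  using assms by (auto simp: tadj_def)

lemma conn_avoid_R':
  assumes "t \<in> e" and "conn_avoid TE t a b"
  shows "(a, b) \<in> (tadj (TE - {e}))\<^sup>*"
  using assms(2) rtrancl_mono[OF avoid_sub[OF assms(1), of TE]] unfolding conn_avoid_def by blast

lemma walk_avoid:
  assumes "e = {y', y}"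
  shows "(x, z) \<in> (tadj TE) ^^ m \<Longrightarrow> (x, z) \<in> (tadj (TE - {e}))\<^sup>* \<or> (\<exists>j\<le>m. (x, y) \<in> (tadj TE) ^^ j)"
proof (induction m arbitrary: z)
  case 0
  then show ?case by simp
next
  case (Suc m)
  from Suc.prems obtain z' where z1: "(x, z') \<in> (tadj TE) ^^ m" and z2: "(z', z) \<in> tadj TE"
    by (rule relpow_Suc_E)
  show ?case
  proof (cases "{z', z} = e")
    case True
    then have "z = y \<or> z' = y" using assms by (auto simp: doubleton_eq_iff)
    then show ?thesis
    proof
      assume "z = y" then show ?thesis using Suc.prems by blast
    next
      assume "z' = y" then have "(x, y) \<in> (tadj TE) ^^ m" using z1 by simp
      then show ?thesis using le_Suc_eq by blast
    qed
  next
    case False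
    then have z3: "(z', z) \<in> tadj (TE - {e})" using z2 by (simp add: tadj_def)
    from Suc.IH[OF z1] show ?thesis
    proof
      assume "(x, z') \<in> (tadj (TE - {e}))\<^sup>*"
      then show ?thesis using z3 by (meson rtrancl_into_rtrancl)
    next
      assume "\<exists>j\<le>m. (x, y) \<in> tadj TE ^^ j"
      then show ?thesis by (meson le_Suc_eq)
    qed
  qed
qed

lemma node_of_eq:
  assumes "tcd V E N TE X" "s \<in> N" "v \<in> X s"
  shows "node_of N X v = s"
  unfolding node_of_def
proof (rule the_equality)
  show "s \<in> N \<and> v \<in> X s" using assms by simp
  fix s' assume "s' \<in> N \<and> v \<in> X s'"
  then show "s' = s" using assms unfolding tcd_def by blast
qed

lemma node_of_in:
  assumes "tcd V E N TE X" "v \<in> V"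
  shows "node_of N X v \<in> N \<and> v \<in> X (node_of N X v)"
proof -
  obtain s where "s \<in> N" "v \<in> X s" using assms unfolding tcd_def by blast
  then show ?thesis using node_of_eq[OF assms(1)] by simp
qed

lemma tcd_finite_N: "tcd V E N TE X \<Longrightarrow> finite N"
  unfolding tcd_def is_tree_def by simp

lemma cross_le_cn: "tcd V E N TE X \<Longrightarrow> t \<in> N \<Longrightarrow> cross E N TE X t \<le> crossing_number E N TE X"
  unfolding crossing_number_def using tcd_finite_N by (intro Max_ge) auto

lemma card_X_le: "tcd V E N TE X \<Longrightarrow> s \<in> N \<Longrightarrow> card (X s) \<le> thickness N X"
  unfolding thickness_def using tcd_finite_N by (intro Max_ge) auto

lemma X_sub: "tcd V E N TE X \<Longrightarrow> s \<in> N \<Longrightarrow> X s \<subseteq> V"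
  unfolding tcd_def by blast

lemma crossA:
  assumes fin: "finite E" and winj: "inj_on w L" and wa: "\<forall>l\<in>L. w l \<noteq> a"
    and edges: "\<forall>l\<in>L. {a, w l} \<in> E"
    and cond: "\<forall>l\<in>L. node_of N X (w l) \<noteq> t \<and> node_of N X a \<noteq> t
       \<and> \<not> conn_avoid TE t (node_of N X a) (node_of N X (w l))"
  shows "card L \<le> cross E N TE X t"
proof -
  let ?S = "{e \<in> E. \<exists>u v. e = {u, v} \<and> node_of N X u \<noteq> t \<and> node_of N X v \<noteq> t
        \<and> \<not> conn_avoid TE t (node_of N X u) (node_of N X v)}"
  have inj: "inj_on (\<lambda>l. {a, w l}) L"
  proof
    fix l l' assume l: "l \<in> L" and l': "l' \<in> L" and eq: "{a, w l} = {a, w l'}"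
    then have "w l = w l'" using wa unfolding doubleton_eq_iff by metis
    then show "l = l'" using winj l l' by (simp add: inj_on_def)
  qed
  have "(\<lambda>l. {a, w l}) ` L \<subseteq> ?S"
  proof
    fix e assume "e \<in> (\<lambda>l. {a, w l}) ` L"
    then obtain l where l: "l \<in> L" and e: "e = {a, w l}" by blast
    show "e \<in> ?S" using l e edges cond by blast
  qed
  then have "card L \<le> card ?S"
    using card_inj_on_le[OF inj] fin by auto
  then show ?thesis unfolding cross_def by simp
qed

lemma crossB:
  assumes fin: "finite E" and winj: "inj_on w L" and wb: "\<forall>l\<in>L. w l \<noteq> b"
    and edges: "\<forall>l\<in>L. {w l, b} \<in> E"
    and cond: "\<forall>l\<in>L. node_of N X (w l) \<noteq> t \<and> node_of N X b \<noteq> t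
       \<and> \<not> conn_avoid TE t (node_of N X (w l)) (node_of N X b)"
  shows "card L \<le> cross E N TE X t"
proof -
  have "card L \<le> cross E N TE X t"
    apply (rule crossA[OF fin winj, of b])
    using wb edges cond conn_avoid_sym by (auto simp: insert_commute)
  then show ?thesis .
qed



lemma lower_bound:
  assumes D: "tcd V E N TE X" and finV: "finite V" and finE: "finite E"
    and th: "thickness N X \<le> \<alpha>"
    and aV: "a \<in> V" and bV: "b \<in> V"
    and xy: "node_of N X a \<noteq> node_of N X b"
    and winj: "inj_on w {..<k}"
    and wp: "\<forall>l<k. w l \<in> V \<and> {a, w l} \<in> E \<and> {w l, b} \<in> E \<and> w l \<noteq> a \<and> w l \<noteq> b"
  shows "k \<le> 2 * crossing_number E N TE X + 2 * \<alpha>"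
proof -
  define x where "x = node_of N X a"
  define y where "y = node_of N X b"
  define s where "s l = node_of N X (w l)" for l
  define CN where "CN = crossing_number E N TE X"
  have T: "is_tree N TE" using D unfolding tcd_def by simp
  have xN: "x \<in> N" using node_of_in[OF D aV] x_def by simp
  have yN: "y \<in> N" using node_of_in[OF D bV] y_def by simp
  have xy': "x \<noteq> y" using xy x_def y_def by simp
  have sN: "s l \<in> N \<and> w l \<in> X (s l)" if "l < k" for l
    using node_of_in[OF D] wp that s_def by simp
  have cnt: "card {l \<in> {..<k}. s l = p} \<le> \<alpha>" if "p \<in> N" for p
  proof -
    have "inj_on w {l \<in> {..<k}. s l = p}" using winj by (rule inj_on_subset) auto
    moreover have "w ` {l \<in> {..<k}. s l = p} \<subseteq> X p" using sN by auto
    moreover have "finite (X p)" using X_sub[OF D that] finV by (rule finite_subset)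
    ultimately have "card {l \<in> {..<k}. s l = p} \<le> card (X p)"
      using card_inj_on_le by blast
    also have "\<dots> \<le> \<alpha>" using card_X_le[OF D that] th by simp
    finally show ?thesis .
  qed
  have winjL: "inj_on w L" if "L \<subseteq> {..<k}" for L using winj that by (rule inj_on_subset)
  have split: "card L0 \<le> card LA + card (L0 - LA)" if "LA \<subseteq> L0" for L0 LA :: "nat set"
  proof -
    have "L0 = LA \<union> (L0 - LA)" using that by blast
    then have "card L0 = card (LA \<union> (L0 - LA))" by simp
    also have "\<dots> \<le> card LA + card (L0 - LA)" by (rule card_Un_le)
    finally show ?thesis .
  qed
  let ?R = "tadj TE"
  have conn: "(x, y) \<in> ?R\<^sup>*" using T xN yN unfolding is_tree_def by blast
  define d where "d = (LEAST n. (x, y) \<in> ?R ^^ n)"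
  have dIn: "(x, y) \<in> ?R ^^ d"
  proof -
    have "\<exists>n. (x, y) \<in> ?R ^^ n" using conn rtrancl_power by blast
    then show ?thesis unfolding d_def by (rule LeastI_ex)
  qed
  have dle: "(x, y) \<in> ?R ^^ n \<Longrightarrow> d \<le> n" for n unfolding d_def by (rule Least_le)
  have "d \<noteq> 0" using dIn xy' by (cases d) auto
  then obtain d' where dd: "d = Suc d'" by (cases d) auto
  from dIn dd have "(x, y) \<in> ?R ^^ Suc d'" by simp
  then obtain y' where y1: "(x, y') \<in> ?R ^^ d'" and y2: "(y', y) \<in> ?R"
    by (rule relpow_Suc_E)
  have eTE: "{y', y} \<in> TE" using y2 by (simp add: tadj_def)
  show ?thesis
  proof (cases "d' = 0")
    case True
    then have yx: "y' = x" using y1 by simp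
    define e where "e = {x, y}"
    have eT: "e \<in> TE" using eTE yx e_def by simp
    have key: "\<not> conn_avoid TE y x (s l) \<or> \<not> conn_avoid TE x (s l) y" for l
    proof (rule ccontr)
      assume "\<not> ?thesis"
      then have "(x, s l) \<in> (tadj (TE - {e}))\<^sup>*" "(s l, y) \<in> (tadj (TE - {e}))\<^sup>*"
        using conn_avoid_R'[of y e] conn_avoid_R'[of x e] e_def by auto
      then have "(x, y) \<in> (tadj (TE - {e}))\<^sup>*" by simp
      with tree_edge_cut[OF T eT e_def] show False by simp
    qed
    define L0 where "L0 = {l \<in> {..<k}. s l \<noteq> x \<and> s l \<noteq> y}"
    define LA where "LA = {l \<in> L0. \<not> conn_avoid TE y x (s l)}"
    have LAs: "LA \<subseteq> L0" unfolding LA_def by blast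
    have c1: "card LA \<le> cross E N TE X y"
      apply (rule crossA[OF finE winjL, of LA a])
      using wp xy' unfolding LA_def L0_def s_def x_def y_def by auto
    have c2: "card (L0 - LA) \<le> cross E N TE X x"
      apply (rule crossB[OF finE winjL, of "L0 - LA" b])
      using wp xy' key unfolding LA_def L0_def s_def x_def y_def by auto
    have "{..<k} \<subseteq> L0 \<union> {l \<in> {..<k}. s l = x} \<union> {l \<in> {..<k}. s l = y}"
      unfolding L0_def by auto
    moreover have "finite (L0 \<union> {l \<in> {..<k}. s l = x} \<union> {l \<in> {..<k}. s l = y})"
      unfolding L0_def by simp
    ultimately have "card {..<k} \<le> card (L0 \<union> {l \<in> {..<k}. s l = x} \<union> {l \<in> {..<k}. s l = y})"
      by (rule card_mono[rotated])
    then have "k \<le> card (L0 \<union> {l \<in> {..<k}. s l = x} \<union> {l \<in> {..<k}. s l = y})" by simp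
    also have "\<dots> \<le> card L0 + card {l \<in> {..<k}. s l = x} + card {l \<in> {..<k}. s l = y}"
      by (meson add_le_mono1 card_Un_le le_trans)
    also have "\<dots> \<le> card L0 + \<alpha> + \<alpha>" using cnt xN yN by (meson add_le_mono le_refl)
    also have "card L0 \<le> CN + CN"
      using split[OF LAs] c1 c2 cross_le_cn[OF D xN] cross_le_cn[OF D yN] CN_def by linarith
    finally show ?thesis unfolding CN_def by linarith
  next
    case False
    have "y' \<noteq> y"
    proof
      assume "y' = y" then have "(x, y) \<in> ?R ^^ d'" using y1 by simp
      then have "d \<le> d'" by (rule dle)
      then show False using dd by simp
    qed
    have "y' \<noteq> x"
    proof
      assume "y' = x" then have "(x, y) \<in> ?R ^^ 1" using y2 by simp
      then have "d \<le> 1" by (rule dle)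
      then show False using dd False by simp
    qed
    have y'N: "y' \<in> N" using eTE T unfolding is_tree_def by blast
    define e where "e = {y', y}"
    have eT: "e \<in> TE" using eTE e_def by simp
    have xy'R: "(x, y') \<in> (tadj (TE - {e}))\<^sup>*"
    proof -
      have "(x, y') \<in> (tadj (TE - {e}))\<^sup>* \<or> (\<exists>j\<le>d'. (x, y) \<in> ?R ^^ j)"
        using walk_avoid[OF e_def y1] .
      moreover have "\<not> (\<exists>j\<le>d'. (x, y) \<in> ?R ^^ j)"
      proof
        assume "\<exists>j\<le>d'. (x, y) \<in> ?R ^^ j"
        then obtain j where "j \<le> d'" "(x, y) \<in> ?R ^^ j" by blast
        then show False using dle dd by fastforce
      qed
      ultimately show ?thesis by blast
    qed
    have sep: "\<not> conn_avoid TE y' x y"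
    proof
      assume "conn_avoid TE y' x y"
      then have "(x, y) \<in> (tadj (TE - {e}))\<^sup>*" using conn_avoid_R'[of y' e] e_def by simp
      moreover have "(y', x) \<in> (tadj (TE - {e}))\<^sup>*" using xy'R tadj_rt_sym by blast
      ultimately have "(y', y) \<in> (tadj (TE - {e}))\<^sup>*" by simp
      with tree_edge_cut[OF T eT e_def] show False by simp
    qed
    have key: "\<not> conn_avoid TE y' x (s l) \<or> \<not> conn_avoid TE y' (s l) y" for l
      using sep conn_avoid_trans by blast
    define L0 where "L0 = {l \<in> {..<k}. s l \<noteq> y'}"
    define LA where "LA = {l \<in> L0. \<not> conn_avoid TE y' x (s l)}"
    have LAs: "LA \<subseteq> L0" unfolding LA_def by blast
    have c1: "card LA \<le> cross E N TE X y'"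
      apply (rule crossA[OF finE winjL, of LA a])
      using wp \<open>y' \<noteq> x\<close> unfolding LA_def L0_def s_def x_def y_def by auto
    have c2: "card (L0 - LA) \<le> cross E N TE X y'"
      apply (rule crossB[OF finE winjL, of "L0 - LA" b])
      using wp \<open>y' \<noteq> y\<close> key unfolding LA_def L0_def s_def x_def y_def by auto
    have "{..<k} \<subseteq> L0 \<union> {l \<in> {..<k}. s l = y'}"
      unfolding L0_def by auto
    moreover have "finite (L0 \<union> {l \<in> {..<k}. s l = y'})"
      unfolding L0_def by simp
    ultimately have "card {..<k} \<le> card (L0 \<union> {l \<in> {..<k}. s l = y'})"
      by (rule card_mono[rotated])
    then have "k \<le> card (L0 \<union> {l \<in> {..<k}. s l = y'})" by simp
    also have "\<dots> \<le> card L0 + card {l \<in> {..<k}. s l = y'}"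
      by (rule card_Un_le)
    also have "\<dots> \<le> card L0 + \<alpha>" using cnt y'N by simp
    also have "card L0 \<le> CN + CN"
      using split[OF LAs] c1 c2 cross_le_cn[OF D y'N] CN_def by linarith
    finally show ?thesis unfolding CN_def by linarith
  qed
qed



definition starN :: "nat set \<Rightarrow> nat set" where "starN L = insert 0 (Suc ` L)"
definition starTE :: "nat set \<Rightarrow> nat set set" where "starTE L = (\<lambda>v. {0, Suc v}) ` L"
definition starX :: "nat set \<Rightarrow> nat set \<Rightarrow> nat \<Rightarrow> nat set" where
  "starX C L s = (if s = 0 then C else if s - 1 \<in> L then {s - 1} else {})"

lemma star_tree:
  assumes "finite L"
  shows "is_tree (starN L) (starTE L)"
proof -
  have c0: "(u, 0) \<in> (tadj (starTE L))\<^sup>*" if uN: "u \<in> starN L" for u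
  proof (cases "u = 0")
    case False
    then obtain v where "v \<in> L" "u = Suc v" using uN unfolding starN_def by auto
    then have "(u, 0) \<in> tadj (starTE L)" unfolding tadj_def starTE_def
      by (auto simp: insert_commute)
    then show ?thesis by blast
  qed simp
  have conn: "(u, w) \<in> (tadj (starTE L))\<^sup>*" if "u \<in> starN L" "w \<in> starN L" for u w
    using c0[OF that(1)] tadj_rt_sym[OF c0[OF that(2)]] by simp
  have inj: "inj_on (\<lambda>v. {0, Suc v}) L" by (auto simp: inj_on_def doubleton_eq_iff)
  have "card (starTE L) = card L" unfolding starTE_def using card_image[OF inj] .
  moreover have "card (starN L) = card L + 1"
    unfolding starN_def using assms by (simp add: card_image)
  ultimately show ?thesis unfolding is_tree_def
    using assms conn by (auto simp: starN_def starTE_def)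
qed

lemma star_tcd:
  assumes "finite L" "C \<inter> L = {}"
  shows "tcd (C \<union> L) E (starN L) (starTE L) (starX C L)"
  unfolding tcd_def
proof (intro conjI)
  show "is_tree (starN L) (starTE L)" using star_tree[OF assms(1)] .
  show "\<forall>s\<in>starN L. \<forall>s'\<in>starN L. s \<noteq> s' \<longrightarrow> starX C L s \<inter> starX C L s' = {}"
    using assms(2) unfolding starN_def starX_def by auto
  show "(\<Union>s\<in>starN L. starX C L s) = C \<union> L"
  proof
    show "(\<Union>s\<in>starN L. starX C L s) \<subseteq> C \<union> L" unfolding starN_def starX_def by auto
    show "C \<union> L \<subseteq> (\<Union>s\<in>starN L. starX C L s)"
    proof
      fix v assume "v \<in> C \<union> L"
      then show "v \<in> (\<Union>s\<in>starN L. starX C L s)"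
      proof
        assume "v \<in> C" then show ?thesis unfolding starN_def starX_def by auto
      next
        assume v: "v \<in> L"
        have "v \<in> starX C L (Suc v)" using v unfolding starX_def by simp
        moreover have "Suc v \<in> starN L" using v unfolding starN_def by simp
        ultimately show ?thesis by blast
      qed
    qed
  qed
qed

lemma star_node_C:
  assumes "finite L" "C \<inter> L = {}" "c \<in> C"
  shows "node_of (starN L) (starX C L) c = 0"
  by (rule node_of_eq[OF star_tcd[OF assms(1,2)]]) (use assms in \<open>auto simp: starN_def starX_def\<close>)

lemma star_node_L:
  assumes "finite L" "C \<inter> L = {}" "v \<in> L"
  shows "node_of (starN L) (starX C L) v = Suc v"
  by (rule node_of_eq[OF star_tcd[OF assms(1,2)]]) (use assms in \<open>auto simp: starN_def starX_def\<close>)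



abbreviation "srel P \<equiv> {(a, b). suppress_step P a b}"

lemma step_fst: "suppress_step P S S' \<Longrightarrow> \<exists>v\<in>fst S. fst S' = fst S - {v}"
  unfolding suppress_step_def by blast

lemma reach_sub: "(S, S') \<in> (srel P)\<^sup>* \<Longrightarrow> fst S' \<subseteq> fst S"
proof (induction rule: rtrancl_induct)
  case (step y z) then show ?case using step_fst[of P y z] by auto
qed simp

lemma exists_terminal:
  "finite (fst S) \<Longrightarrow> \<exists>S'. (S, S') \<in> (srel P)\<^sup>* \<and> \<not> (\<exists>S''. suppress_step P S' S'')"
proof (induction "card (fst S)" arbitrary: S rule: less_induct)
  case less
  show ?case
  proof (cases "\<exists>S''. suppress_step P S S''")
    case False then show ?thesis by blast
  next
    case True
    then obtain S1 where st: "suppress_step P S S1" by blast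
    then obtain v where v: "v \<in> fst S" "fst S1 = fst S - {v}" using step_fst by blast
    have "card (fst S1) < card (fst S)" using v less.prems by (metis card_Diff1_less)
    moreover have "finite (fst S1)" using v less.prems by simp
    ultimately obtain S' where "(S1, S') \<in> (srel P)\<^sup>*" "\<not> (\<exists>S''. suppress_step P S' S'')"
      using less.hyps by blast
    moreover have "(S, S1) \<in> srel P" using st by simp
    ultimately show ?thesis by (meson converse_rtrancl_into_rtrancl)
  qed
qed

lemma center_size_le:
  assumes fin: "finite (fst S)"
    and bd: "\<And>S'. (S, S') \<in> (srel P)\<^sup>* \<Longrightarrow> \<not> (\<exists>S''. suppress_step P S' S'') \<Longrightarrow> card (fst S') \<le> c"
  shows "center_size P S \<le> c"
proof -
  let ?A = "{card (fst S') | S'. (S, S') \<in> (srel P)\<^sup>* \<and> \<not> (\<exists>S''. suppress_step P S' S'')}"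
  have sub: "?A \<subseteq> {..c}" using bd by auto
  have fA: "finite ?A" using sub finite_subset by blast
  have nA: "?A \<noteq> {}" using exists_terminal[OF fin, of P] by blast
  have "Max ?A \<le> c" using sub fA nA by (simp add: Max_le_iff subset_eq)
  moreover have "center_size P S = Max ?A"
    unfolding center_size_def by simp
  ultimately show ?thesis by simp
qed

lemma center_size_le_card:
  assumes fin: "finite (fst S)"
  shows "center_size P S \<le> card (fst S)"
  by (rule center_size_le[OF fin]) (use reach_sub fin in \<open>meson card_mono\<close>)



definition Inv :: "nat set \<Rightarrow> ((nat + nat) set \<times> (nat + nat) set multiset) \<Rightarrow> bool" where
  "Inv A0 S \<longleftrightarrow> fst S \<subseteq> Inl ` A0 \<union> range Inr \<and>
     (\<forall>r. Inr r \<in> fst S \<longrightarrow> (\<exists>a1 a2. filter_mset (\<lambda>e. Inr r \<in> e) (snd S) = {#{Inl a1, Inr r}, {Inl a2, Inr r}#}))"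

lemma mdeg_filter: "mdeg M v = mdeg (filter_mset (\<lambda>e. v \<in> e) M) v"
proof -
  have "mdeg (filter_mset (\<lambda>e. v \<in> e) M + filter_mset (\<lambda>e. \<not> v \<in> e) M) v
     = mdeg (filter_mset (\<lambda>e. v \<in> e) M) v + mdeg (filter_mset (\<lambda>e. \<not> v \<in> e) M) v"
    unfolding mdeg_def by (simp only: image_mset_union sum_mset.union)
  then have "mdeg M v = mdeg (filter_mset (\<lambda>e. v \<in> e) M) v + mdeg (filter_mset (\<lambda>e. \<not> v \<in> e) M) v"
    by (simp only: multiset_partition[symmetric])
  moreover have "mdeg (filter_mset (\<lambda>e. \<not> v \<in> e) M) v = 0"
    unfolding mdeg_def by (induction M) auto
  ultimately show ?thesis by simp
qed

lemma card_lr: "card {Inl a, Inr r} = 2" by simp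

lemma mdeg_two: "mdeg {#{Inl a1, Inr r}, {Inl a2, Inr r}#} (Inr r) = 2"
  unfolding mdeg_def by simp

lemma inv_mdeg:
  assumes "filter_mset (\<lambda>e. Inr r \<in> e) M = {#{Inl a1, Inr r}, {Inl a2, Inr r}#}"
  shows "mdeg M (Inr r) = 2"
  using mdeg_filter[of M "Inr r"] assms mdeg_two by simp

lemma inv_step:
  assumes I: "Inv A0 S" and st: "suppress_step (Inl ` A0) S S'"
  shows "Inv A0 S'"
proof -
  obtain v where v: "v \<in> fst S - Inl ` A0" and dv: "mdeg (snd S) v \<le> 2"
    and f': "fst S' = fst S - {v}"
    and s': "snd S' = filter_mset (\<lambda>e. v \<notin> e) (snd S)
         + (if mdeg (snd S) v = 2 \<and> (\<forall>e\<in>#snd S. v \<in> e \<longrightarrow> card e = 2)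
            then {# \<Union>e\<in>set_mset (filter_mset (\<lambda>e. v \<in> e) (snd S)). e - {v} #} else {#})"
    using st unfolding suppress_step_def by blast
  obtain r where vr: "v = Inr r" using v I unfolding Inv_def by auto
  obtain a1 a2 where fr: "filter_mset (\<lambda>e. Inr r \<in> e) (snd S) = {#{Inl a1, Inr r}, {Inl a2, Inr r}#}"
    using I v vr unfolding Inv_def by auto
  define U where "U = (\<Union>e\<in>set_mset (filter_mset (\<lambda>e. v \<in> e) (snd S)). e - {v})"
  have U: "U = {Inl a1, Inl a2}" unfolding U_def vr fr by auto
  have s2: "snd S' = filter_mset (\<lambda>e. v \<notin> e) (snd S) + (if mdeg (snd S) v = 2 \<and> (\<forall>e\<in>#snd S. v \<in> e \<longrightarrow> card e = 2) then {#U#} else {#})"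
    using s' U_def by simp
  show ?thesis unfolding Inv_def
  proof (intro conjI allI impI)
    show "fst S' \<subseteq> Inl ` A0 \<union> range Inr" using I f' unfolding Inv_def by auto
    fix r' assume r': "Inr r' \<in> fst S'"
    then have rr: "r' \<noteq> r" using f' vr by auto
    have "Inr r' \<in> fst S" using r' f' by auto
    then obtain b1 b2 where fr': "filter_mset (\<lambda>e. Inr r' \<in> e) (snd S) = {#{Inl b1, Inr r'}, {Inl b2, Inr r'}#}"
      using I unfolding Inv_def by auto
    have "filter_mset (\<lambda>e. Inr r' \<in> e) (filter_mset (\<lambda>e. v \<notin> e) (snd S))
        = filter_mset (\<lambda>e. v \<notin> e) (filter_mset (\<lambda>e. Inr r' \<in> e) (snd S))"
      by (simp add: filter_filter_mset conj_commute)
    also have "\<dots> = {#{Inl b1, Inr r'}, {Inl b2, Inr r'}#}" using fr' vr rr by simp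
    finally have A: "filter_mset (\<lambda>e. Inr r' \<in> e) (filter_mset (\<lambda>e. v \<notin> e) (snd S)) = {#{Inl b1, Inr r'}, {Inl b2, Inr r'}#}" .
    have B: "Inr r' \<notin> U" using U by simp
    show "\<exists>a1 a2. filter_mset (\<lambda>e. Inr r' \<in> e) (snd S') = {#{Inl a1, Inr r'}, {Inl a2, Inr r'}#}"
      using A B s2 by auto
  qed
qed

lemma inv_reach: "(S, S') \<in> (srel (Inl ` A0))\<^sup>* \<Longrightarrow> Inv A0 S \<Longrightarrow> Inv A0 S'"
  by (induction rule: rtrancl_induct) (auto intro: inv_step)

lemma inv_terminal:
  assumes I: "Inv A0 S" and nt: "\<not> (\<exists>S''. suppress_step (Inl ` A0) S S'')"
  shows "fst S \<subseteq> Inl ` A0"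
proof
  fix x assume x: "x \<in> fst S"
  show "x \<in> Inl ` A0"
  proof (rule ccontr)
    assume nx: "x \<notin> Inl ` A0"
    then obtain r where xr: "x = Inr r" using I x unfolding Inv_def by auto
    obtain a1 a2 where fr: "filter_mset (\<lambda>e. Inr r \<in> e) (snd S) = {#{Inl a1, Inr r}, {Inl a2, Inr r}#}"
      using I x xr unfolding Inv_def by auto
    have "mdeg (snd S) x = 2" using inv_mdeg[OF fr] xr by simp
    then have "suppress_step (Inl ` A0) S (fst S - {x}, filter_mset (\<lambda>e. x \<notin> e) (snd S)
         + (if mdeg (snd S) x = 2 \<and> (\<forall>e\<in>#snd S. x \<in> e \<longrightarrow> card e = 2)
            then {# \<Union>e\<in>set_mset (filter_mset (\<lambda>e. x \<in> e) (snd S)). e - {x} #} else {#}))"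
      unfolding suppress_step_def using x nx by auto
    with nt show False by blast
  qed
qed

lemma center_size_inv:
  assumes "finite (fst S)" "Inv A0 S" "finite A0"
  shows "center_size (Inl ` A0) S \<le> card A0"
proof (rule center_size_le[OF assms(1)])
  fix S' assume r: "(S, S') \<in> (srel (Inl ` A0))\<^sup>*" and nt: "\<not> (\<exists>S''. suppress_step (Inl ` A0) S' S'')"
  have "fst S' \<subseteq> Inl ` A0" using inv_terminal[OF inv_reach[OF r assms(2)] nt] .
  then have "card (fst S') \<le> card (Inl ` A0 :: (nat + nat) set)" using assms(3) by (auto intro!: card_mono)
  also have "\<dots> = card A0" by (simp add: card_image)
  finally show "card (fst S') \<le> card A0" .
qed



definition bcode :: "nat \<Rightarrow> nat \<Rightarrow> nat \<Rightarrow> nat" where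
  "bcode i j l = 2 * prod_encode (prod_encode (i, j), l) + 1"

lemma bcode_inj[simp]: "bcode i j l = bcode i' j' l' \<longleftrightarrow> i = i' \<and> j = j' \<and> l = l'"
  unfolding bcode_def by (auto simp: prod_encode_eq)

lemma bcode_odd[simp]: "2 * m \<noteq> bcode i j l" "bcode i j l \<noteq> 2 * m"
  unfolding bcode_def by presburger+

definition Aset :: "nat \<Rightarrow> nat set" where "Aset \<alpha> = (\<lambda>i. 2 * i) ` {..\<alpha>}"
definition Bset :: "nat \<Rightarrow> nat \<Rightarrow> nat set" where
  "Bset \<alpha> k = {bcode i j l | i j l. i < j \<and> j \<le> \<alpha> \<and> l < k}"
definition Eset :: "nat \<Rightarrow> nat \<Rightarrow> nat set set" where
  "Eset \<alpha> k = {{2 * m, bcode i j l} | m i j l. i < j \<and> j \<le> \<alpha> \<and> l < k \<and> (m = i \<or> m = j)}"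

lemma finite_A: "finite (Aset \<alpha>)" unfolding Aset_def by simp

lemma card_A: "card (Aset \<alpha>) = \<alpha> + 1"
  unfolding Aset_def by (subst card_image) (auto simp: inj_on_def)

lemma finite_B: "finite (Bset \<alpha> k)"
proof -
  have "Bset \<alpha> k \<subseteq> (\<lambda>(i, j, l). bcode i j l) ` ({..\<alpha>} \<times> {..\<alpha>} \<times> {..<k})"
  proof
    fix x assume "x \<in> Bset \<alpha> k"
    then obtain i j l where x: "x = bcode i j l" "i < j" "j \<le> \<alpha>" "l < k" unfolding Bset_def by blast
    show "x \<in> (\<lambda>(i, j, l). bcode i j l) ` ({..\<alpha>} \<times> {..\<alpha>} \<times> {..<k})"
      by (rule image_eqI[where x="(i, j, l)"]) (use x in simp_all)
  qed
  then show ?thesis by (rule finite_subset) simp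
qed

lemma finite_E: "finite (Eset \<alpha> k)"
proof -
  have "Eset \<alpha> k \<subseteq> (\<lambda>(m, i, j, l). {2 * m, bcode i j l}) ` ({..\<alpha>} \<times> {..\<alpha>} \<times> {..\<alpha>} \<times> {..<k})"
  proof
    fix x assume "x \<in> Eset \<alpha> k"
    then obtain m i j l where x: "x = {2 * m, bcode i j l}" "i < j" "j \<le> \<alpha>" "l < k" "m = i \<or> m = j"
      unfolding Eset_def by blast
    show "x \<in> (\<lambda>(m, i, j, l). {2 * m, bcode i j l}) ` ({..\<alpha>} \<times> {..\<alpha>} \<times> {..\<alpha>} \<times> {..<k})"
      by (rule image_eqI[where x="(m, i, j, l)"]) (use x in auto)
  qed
  then show ?thesis by (rule finite_subset) simp
qed

lemma AB_disj: "Aset \<alpha> \<inter> Bset \<alpha> k = {}"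
  unfolding Aset_def Bset_def by auto

lemma graph_G: "graph (Aset \<alpha> \<union> Bset \<alpha> k) (Eset \<alpha> k)"
  unfolding graph_def
proof (intro conjI ballI)
  show "finite (Aset \<alpha> \<union> Bset \<alpha> k)" using finite_A finite_B by simp
  fix e assume "e \<in> Eset \<alpha> k"
  then obtain m i j l where e: "e = {2 * m, bcode i j l}" and c: "i < j" "j \<le> \<alpha>" "l < k" "m = i \<or> m = j"
    unfolding Eset_def by blast
  have "2 * m \<in> Aset \<alpha>" using c unfolding Aset_def by auto
  moreover have "bcode i j l \<in> Bset \<alpha> k" using c unfolding Bset_def by auto
  ultimately show "e \<subseteq> Aset \<alpha> \<union> Bset \<alpha> k" using e by auto
  show "card e = 2" using e by simp
qed

lemma edges_at:
  assumes "i < j" "j \<le> \<alpha>" "l < k"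
  shows "{g \<in> Eset \<alpha> k. bcode i j l \<in> g} = {{2 * i, bcode i j l}, {2 * j, bcode i j l}}"
proof
  show "{g \<in> Eset \<alpha> k. bcode i j l \<in> g} \<subseteq> {{2 * i, bcode i j l}, {2 * j, bcode i j l}}"
  proof
    fix g assume "g \<in> {g \<in> Eset \<alpha> k. bcode i j l \<in> g}"
    then obtain m i' j' l' where g: "g = {2 * m, bcode i' j' l'}" and c: "m = i' \<or> m = j'"
      and w: "bcode i j l \<in> g" unfolding Eset_def by blast
    then have "bcode i j l = bcode i' j' l'" by auto
    then show "g \<in> {{2 * i, bcode i j l}, {2 * j, bcode i j l}}" using g c by auto
  qed
  show "{{2 * i, bcode i j l}, {2 * j, bcode i j l}} \<subseteq> {g \<in> Eset \<alpha> k. bcode i j l \<in> g}"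
    using assms unfolding Eset_def by blast
qed



lemma edgeE:
  assumes "g \<in> Eset \<alpha> k"
  obtains m i j l where "g = {2 * m, bcode i j l}" "i < j" "j \<le> \<alpha>" "l < k" "m = i \<or> m = j"
  using assms unfolding Eset_def by blast

lemma bcode_B: "i < j \<Longrightarrow> j \<le> \<alpha> \<Longrightarrow> l < k \<Longrightarrow> bcode i j l \<in> Bset \<alpha> k"
  unfolding Bset_def by blast

lemma twom_A: "m \<le> \<alpha> \<Longrightarrow> 2 * m \<in> Aset \<alpha>"
  unfolding Aset_def by blast

lemma node_A: "a \<in> Aset \<alpha> \<Longrightarrow> node_of (starN (Bset \<alpha> k)) (starX (Aset \<alpha>) (Bset \<alpha> k)) a = 0"
  by (rule star_node_C[OF finite_B AB_disj])

lemma node_B: "v \<in> Bset \<alpha> k \<Longrightarrow> node_of (starN (Bset \<alpha> k)) (starX (Aset \<alpha>) (Bset \<alpha> k)) v = Suc v"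
  by (rule star_node_L[OF finite_B AB_disj])

lemma adh_le:
  assumes eT: "e \<in> starTE (Bset \<alpha> k)"
  shows "card (adh (Eset \<alpha> k) (starN (Bset \<alpha> k)) (starTE (Bset \<alpha> k)) (starX (Aset \<alpha>) (Bset \<alpha> k)) e) \<le> 2"
proof -
  let ?N = "starN (Bset \<alpha> k)" and ?TE = "starTE (Bset \<alpha> k)" and ?X = "starX (Aset \<alpha>) (Bset \<alpha> k)"
  obtain v where vB: "v \<in> Bset \<alpha> k" and ev: "e = {0, Suc v}" using eT unfolding starTE_def by blast
  obtain i j l where v: "v = bcode i j l" "i < j" "j \<le> \<alpha>" "l < k" using vB unfolding Bset_def by blast
  have sub: "adh (Eset \<alpha> k) ?N ?TE ?X e \<subseteq> {g \<in> Eset \<alpha> k. v \<in> g}"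
  proof
    fix g assume g: "g \<in> adh (Eset \<alpha> k) ?N ?TE ?X e"
    then have gE: "g \<in> Eset \<alpha> k" unfolding adh_def by blast
    show "g \<in> {g \<in> Eset \<alpha> k. v \<in> g}"
    proof (rule ccontr)
      assume nv: "g \<notin> {g \<in> Eset \<alpha> k. v \<in> g}"
      obtain m i' j' l' where g1: "g = {2 * m, bcode i' j' l'}" "i' < j'" "j' \<le> \<alpha>" "l' < k" "m = i' \<or> m = j'"
        using gE by (rule edgeE)
      define u where "u = bcode i' j' l'"
      have uB: "u \<in> Bset \<alpha> k" using g1 bcode_B u_def by simp
      have mA: "2 * m \<in> Aset \<alpha>" using g1 twom_A by auto
      have uv: "u \<noteq> v" using nv gE g1 u_def by auto
      have edge: "{0, Suc u} \<in> ?TE - {e}" using uB uv ev unfolding starTE_def by auto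
      have c1: "(0, Suc u) \<in> (tadj (?TE - {e}))\<^sup>*" using edge by (auto simp: tadj_def)
      have c2: "(Suc u, 0) \<in> (tadj (?TE - {e}))\<^sup>*" using tadj_rt_sym[OF c1] .
      have allc: "(p, q) \<in> (tadj (?TE - {e}))\<^sup>*" if "p \<in> {0, Suc u}" "q \<in> {0, Suc u}" for p q
        using that c1 c2 by auto
      have nodes: "node_of ?N ?X x \<in> {0, Suc u}" if "x \<in> g" for x
        using that g1 u_def node_A[OF mA] node_B[OF uB] by auto
      from g obtain x y where xy: "g = {x, y}" and nc: "\<not> conn_avoid_edge ?TE e (node_of ?N ?X x) (node_of ?N ?X y)"
        unfolding adh_def by blast
      have "conn_avoid_edge ?TE e (node_of ?N ?X x) (node_of ?N ?X y)"
        unfolding conn_avoid_edge_def using allc nodes xy by simp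
      with nc show False by simp
    qed
  qed
  have "card (adh (Eset \<alpha> k) ?N ?TE ?X e) \<le> card {g \<in> Eset \<alpha> k. v \<in> g}"
    by (rule card_mono[OF _ sub]) (simp add: finite_E)
  also have "\<dots> = card {{2 * i, bcode i j l}, {2 * j, bcode i j l}}" using edges_at[OF v(2-4)] v(1) by simp
  also have "\<dots> \<le> 2" by (rule card_insert_le_m1) auto
  finally show ?thesis .
qed



lemma star_conn_avoid0: "conn_avoid (starTE L) 0 a b \<longleftrightarrow> a = b"
proof -
  have "{(x, y). {x, y} \<in> starTE L \<and> x \<noteq> 0 \<and> y \<noteq> 0} = {}"
    unfolding starTE_def by (auto simp: doubleton_eq_iff)
  then show ?thesis unfolding conn_avoid_def by (simp only:) simp
qed

context
  fixes \<alpha> k :: nat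
begin

abbreviation "NN \<equiv> starN (Bset \<alpha> k)"
abbreviation "TT \<equiv> starTE (Bset \<alpha> k)"
abbreviation "XX \<equiv> starX (Aset \<alpha>) (Bset \<alpha> k)"
abbreviation "EE \<equiv> Eset \<alpha> k"

lemma tmap_A: "x \<in> Aset \<alpha> \<Longrightarrow> tmap NN TT XX 0 x = Inl x"
  unfolding tmap_def using node_A by simp

lemma tmap_B: "x \<in> Bset \<alpha> k \<Longrightarrow> tmap NN TT XX 0 x = Inr (Suc x)"
proof -
  assume xB: "x \<in> Bset \<alpha> k"
  have "(THE s. {0, s} \<in> TT \<and> conn_avoid TT 0 s (node_of NN XX x)) = Suc x"
  proof (rule the_equality)
    show "{0, Suc x} \<in> TT \<and> conn_avoid TT 0 (Suc x) (node_of NN XX x)"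
      using xB node_B[OF xB] star_conn_avoid0 unfolding starTE_def by auto
    fix s assume "{0, s} \<in> TT \<and> conn_avoid TT 0 s (node_of NN XX x)"
    then show "s = Suc x" using node_B[OF xB] star_conn_avoid0 by simp
  qed
  then show ?thesis unfolding tmap_def using node_B[OF xB] by simp
qed

lemma tmap_edge:
  assumes "i < j" "j \<le> \<alpha>" "l < k" "m = i \<or> m = j"
  shows "tmap NN TT XX 0 ` {2 * m, bcode i j l} = {Inl (2 * m), Inr (Suc (bcode i j l))}"
  using tmap_A[OF twom_A] tmap_B[OF bcode_B] assms by auto

lemma filter_set:
  assumes w: "w = bcode i j l" "i < j" "j \<le> \<alpha>" "l < k"
  shows "{e \<in> EE. card (tmap NN TT XX 0 ` e) = 2 \<and> Inr (Suc w) \<in> tmap NN TT XX 0 ` e}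
       = {{2 * i, w}, {2 * j, w}}" (is "?S = _")
proof
  show "?S \<subseteq> {{2 * i, w}, {2 * j, w}}"
  proof
    fix e assume e: "e \<in> ?S"
    then obtain m i' j' l' where g: "e = {2 * m, bcode i' j' l'}" "i' < j'" "j' \<le> \<alpha>" "l' < k" "m = i' \<or> m = j'"
      by (auto elim: edgeE)
    have tm: "tmap NN TT XX 0 ` e = {Inl (2 * m), Inr (Suc (bcode i' j' l'))}"
      using g(1) tmap_edge[OF g(2-5)] by simp
    have "Inr (Suc w) \<in> tmap NN TT XX 0 ` e" using e by blast
    then have "Inr (Suc w) \<in> {Inl (2 * m), Inr (Suc (bcode i' j' l'))}" using tm by simp
    then have "bcode i' j' l' = w" by simp
    then show "e \<in> {{2 * i, w}, {2 * j, w}}" using g w by auto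
  qed
  show "{{2 * i, w}, {2 * j, w}} \<subseteq> ?S"
  proof -
    have "{2 * i, w} \<in> EE" "{2 * j, w} \<in> EE" using w unfolding Eset_def by blast+
    moreover have "tmap NN TT XX 0 ` {2 * i, w} = {Inl (2 * i), Inr (Suc w)}"
      using tmap_edge[of i j l i] w by simp
    moreover have "tmap NN TT XX 0 ` {2 * j, w} = {Inl (2 * j), Inr (Suc w)}"
      using tmap_edge[of i j l j] w by simp
    ultimately show ?thesis by simp
  qed
qed

lemma center_inv: "Inv (Aset \<alpha>) (torso_V TT XX 0, torso_E EE NN TT XX 0)"
  unfolding Inv_def
proof (intro conjI allI impI)
  have X0: "XX 0 = Aset \<alpha>" unfolding starX_def by simp
  show "fst (torso_V TT XX 0, torso_E EE NN TT XX 0) \<subseteq> Inl ` Aset \<alpha> \<union> range Inr"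
    unfolding torso_V_def X0 by auto
  fix r assume "Inr r \<in> fst (torso_V TT XX 0, torso_E EE NN TT XX 0)"
  then have "{0, r} \<in> TT" unfolding torso_V_def by auto
  then obtain w where wB: "w \<in> Bset \<alpha> k" and "{0, r} = {0, Suc w}" unfolding starTE_def by auto
  then have rw: "r = Suc w" by (auto simp: doubleton_eq_iff)
  obtain i j l where w: "w = bcode i j l" "i < j" "j \<le> \<alpha>" "l < k" using wB unfolding Bset_def by blast
  let ?tm = "tmap NN TT XX 0"
  have ne: "{2 * i, w} \<noteq> {2 * j, w}" using w by (auto simp: doubleton_eq_iff)
  have "filter_mset (\<lambda>e. Inr r \<in> e) (torso_E EE NN TT XX 0)
      = image_mset ((`) ?tm) (mset_set {e \<in> EE. card (?tm ` e) = 2 \<and> Inr r \<in> ?tm ` e})"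
    unfolding torso_E_def filter_mset_image_mset filter_filter_mset
    by (simp add: filter_mset_mset_set finite_E)
  also have "{e \<in> EE. card (?tm ` e) = 2 \<and> Inr r \<in> ?tm ` e} = {{2 * i, w}, {2 * j, w}}"
    using filter_set[OF w] rw by simp
  also have "image_mset ((`) ?tm) (mset_set {{2 * i, w}, {2 * j, w}})
      = {#?tm ` {2 * i, w}, ?tm ` {2 * j, w}#}" using ne by simp
  also have "\<dots> = {#{Inl (2 * i), Inr r}, {Inl (2 * j), Inr r}#}"
    using tmap_edge[of i j l i] tmap_edge[of i j l j] w rw by simp
  finally show "\<exists>a1 a2. filter_mset (\<lambda>e. Inr r \<in> e) (snd (torso_V TT XX 0, torso_E EE NN TT XX 0))
      = {#{Inl a1, Inr r}, {Inl a2, Inr r}#}" by auto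
qed

lemma center_fin: "finite (torso_V TT XX 0)"
proof -
  have "{s. {0, s} \<in> TT} \<subseteq> Suc ` Bset \<alpha> k" unfolding starTE_def by (auto simp: doubleton_eq_iff)
  then have "finite {s. {0, s} \<in> TT}" using finite_B finite_subset by blast
  then show ?thesis unfolding torso_V_def starX_def using finite_A by simp
qed

lemma center_size_0: "center_size (Inl ` XX 0) (torso_V TT XX 0, torso_E EE NN TT XX 0) \<le> \<alpha> + 1"
proof -
  have X0: "XX 0 = Aset \<alpha>" unfolding starX_def by simp
  show ?thesis using center_size_inv[OF _ center_inv finite_A] center_fin card_A X0 by simp
qed

lemma center_size_leaf:
  assumes vB: "v \<in> Bset \<alpha> k"
  shows "center_size (Inl ` XX (Suc v)) (torso_V TT XX (Suc v), torso_E EE NN TT XX (Suc v)) \<le> 2"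
proof -
  have sub: "torso_V TT XX (Suc v) \<subseteq> {Inl v, Inr 0}"
    using vB unfolding torso_V_def starX_def starTE_def by (auto simp: doubleton_eq_iff)
  have fin: "finite (torso_V TT XX (Suc v))" by (rule finite_subset[OF sub]) simp
  have "card (torso_V TT XX (Suc v)) \<le> card {Inl v, Inr (0::nat) :: nat + nat}"
    by (rule card_mono[OF _ sub]) simp
  also have "\<dots> = 2" by simp
  finally have "card (torso_V TT XX (Suc v)) \<le> 2" .
  moreover have "center_size (Inl ` XX (Suc v)) (torso_V TT XX (Suc v), torso_E EE NN TT XX (Suc v))
      \<le> card (torso_V TT XX (Suc v))" using center_size_le_card[of "(torso_V TT XX (Suc v), torso_E EE NN TT XX (Suc v))"] fin by simp
  ultimately show ?thesis by simp
qed

end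



lemma bcode_ne0[simp]: "bcode i j l \<noteq> 0" "0 \<noteq> bcode i j l"
  unfolding bcode_def by simp_all

lemma tcw_bound: "tcw (Aset \<alpha> \<union> Bset \<alpha> k) (Eset \<alpha> k) \<le> \<alpha> + 2"
proof -
  let ?N = "starN (Bset \<alpha> k)" and ?TE = "starTE (Bset \<alpha> k)" and ?X = "starX (Aset \<alpha>) (Bset \<alpha> k)"
    and ?E = "Eset \<alpha> k"
  have D: "tcd (Aset \<alpha> \<union> Bset \<alpha> k) ?E ?N ?TE ?X" by (rule star_tcd[OF finite_B AB_disj])
  have finTE: "finite ?TE" unfolding starTE_def using finite_B by simp
  have finN: "finite ?N" unfolding starN_def using finite_B by simp
  have p1: "Max (insert 0 ((\<lambda>e. card (adh ?E ?N ?TE ?X e)) ` ?TE)) \<le> 2"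
    using finTE adh_le by (simp add: Max_le_iff)
  have p2: "Max ((\<lambda>t. center_size (Inl ` ?X t) (torso_V ?TE ?X t, torso_E ?E ?N ?TE ?X t)) ` ?N) \<le> \<alpha> + 2"
  proof -
    have "center_size (Inl ` ?X t) (torso_V ?TE ?X t, torso_E ?E ?N ?TE ?X t) \<le> \<alpha> + 2" if tN: "t \<in> ?N" for t
    proof (cases "t = 0")
      case True then show ?thesis using center_size_0[of \<alpha> k] by simp
    next
      case False
      then obtain v where "v \<in> Bset \<alpha> k" "t = Suc v" using tN unfolding starN_def by auto
      then show ?thesis using center_size_leaf[of v \<alpha> k] by simp
    qed
    moreover have "?N \<noteq> {}" unfolding starN_def by simp
    ultimately show ?thesis using finN by (simp add: Max_le_iff)
  qed
  have w: "tcw_width ?E ?N ?TE ?X \<le> \<alpha> + 2"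
    unfolding tcw_width_def using p1 p2 by simp
  have mem: "tcw_width ?E ?N ?TE ?X \<in> {w. \<exists>N TE X. tcd (Aset \<alpha> \<union> Bset \<alpha> k) ?E N TE X \<and> w = tcw_width ?E N TE X}"
    using D by blast
  have "tcw (Aset \<alpha> \<union> Bset \<alpha> k) ?E \<le> tcw_width ?E ?N ?TE ?X"
    unfolding tcw_def Inf_nat_def using mem by (rule Least_le)
  then show ?thesis using w by simp
qed

lemma split_A:
  assumes D: "tcd (Aset \<alpha> \<union> Bset \<alpha> k) E N TE X" and th: "thickness N X \<le> \<alpha>"
  shows "\<exists>i. 0 < i \<and> i \<le> \<alpha> \<and> node_of N X (2 * i) \<noteq> node_of N X 0"
proof (rule ccontr)
  assume "\<not> ?thesis"
  then have eq: "node_of N X (2 * i) = node_of N X 0" if "i \<le> \<alpha>" for i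
    using that by (cases "i = 0") auto
  let ?V = "Aset \<alpha> \<union> Bset \<alpha> k"
  let ?t = "node_of N X 0"
  have A0: "0 \<in> ?V" using twom_A[of 0 \<alpha>] by simp
  have tN: "?t \<in> N" using node_of_in[OF D A0] by simp
  have "Aset \<alpha> \<subseteq> X ?t"
  proof
    fix a assume "a \<in> Aset \<alpha>"
    then obtain i where i: "i \<le> \<alpha>" "a = 2 * i" unfolding Aset_def by auto
    then have "a \<in> ?V" using twom_A by auto
    then have "a \<in> X (node_of N X a)" using node_of_in[OF D] by simp
    then show "a \<in> X ?t" using eq[OF i(1)] i(2) by simp
  qed
  moreover have "finite (X ?t)" using X_sub[OF D tN] finite_A finite_B finite_subset by blast
  ultimately have "card (Aset \<alpha>) \<le> card (X ?t)" by (rule card_mono[rotated])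
  also have "\<dots> \<le> \<alpha>" using card_X_le[OF D tN] th by simp
  finally show False using card_A by simp
qed

theorem lemma3p8:
  fixes \<alpha> :: nat
  assumes "\<alpha> > 0"
  shows "\<not> (\<exists>f :: nat \<Rightarrow> nat. \<forall>V E. graph V E \<longrightarrow> ecrw \<alpha> V E \<le> f (tcw V E))"
proof
  assume "\<exists>f :: nat \<Rightarrow> nat. \<forall>V E. graph V E \<longrightarrow> ecrw \<alpha> V E \<le> f (tcw V E)"
  then obtain f :: "nat \<Rightarrow> nat" where f: "\<And>V E. graph V E \<Longrightarrow> ecrw \<alpha> V E \<le> f (tcw V E)" by blast
  define M where "M = Max (f ` {..\<alpha> + 2})"
  define k where "k = 2 * (M + 1) + 2 * \<alpha>"
  define V where "V = Aset \<alpha> \<union> Bset \<alpha> k"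
  define E where "E = Eset \<alpha> k"
  have finV: "finite V" unfolding V_def using finite_A finite_B by simp
  have finE: "finite E" unfolding E_def by (rule finite_E)
  have h1: "ecrw \<alpha> V E \<le> f (tcw V E)" using f graph_G V_def E_def by simp
  have "tcw V E \<in> {..\<alpha> + 2}" using tcw_bound V_def E_def by simp
  then have h2: "f (tcw V E) \<le> M" unfolding M_def by simp
  let ?S = "{c. \<exists>N TE X. tcd V E N TE X \<and> thickness N X \<le> \<alpha> \<and> c = crossing_number E N TE X}"
  have D2: "tcd ({} \<union> V) E (starN V) (starTE V) (starX {} V)" by (rule star_tcd[OF finV]) simp
  have th2: "thickness (starN V) (starX {} V) \<le> \<alpha>"
  proof -
    have fin: "finite (starN V)" unfolding starN_def using finV by simp
    have "card (starX {} V s) \<le> 1" for s unfolding starX_def by simp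
    then have "thickness (starN V) (starX {} V) \<le> 1"
      unfolding thickness_def using fin by (simp add: Max_le_iff starN_def)
    then show ?thesis using assms by simp
  qed
  have "crossing_number E (starN V) (starTE V) (starX {} V) \<in> ?S" using D2 th2 by auto
  then have "\<exists>c. c \<in> ?S" by blast
  then have "Inf ?S \<in> ?S" unfolding Inf_nat_def by (rule LeastI_ex)
  then obtain N TE X where D: "tcd V E N TE X" and th: "thickness N X \<le> \<alpha>"
    and cn: "ecrw \<alpha> V E = crossing_number E N TE X" unfolding ecrw_def by blast
  obtain i where i: "0 < i" "i \<le> \<alpha>" "node_of N X (2 * i) \<noteq> node_of N X 0"
    using split_A[of \<alpha> k E N TE X] D th V_def by blast
  define w where "w l = bcode 0 i l" for l
  have winj: "inj_on w {..<k}" unfolding w_def inj_on_def by simp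
  have wp: "\<forall>l<k. w l \<in> V \<and> {0, w l} \<in> E \<and> {w l, 2 * i} \<in> E \<and> w l \<noteq> 0 \<and> w l \<noteq> 2 * i"
  proof (intro allI impI conjI)
    fix l assume l: "l < k"
    show "w l \<in> V" unfolding w_def V_def using bcode_B[OF i(1) i(2) l] by simp
    have "{2 * 0, bcode 0 i l} \<in> E" unfolding E_def Eset_def using i l by blast
    then show "{0, w l} \<in> E" unfolding w_def by simp
    have "{2 * i, bcode 0 i l} \<in> E" unfolding E_def Eset_def using i l by blast
    then show "{w l, 2 * i} \<in> E" unfolding w_def by (simp add: insert_commute)
    show "w l \<noteq> 0" unfolding w_def by simp
    show "w l \<noteq> 2 * i" unfolding w_def using bcode_odd by metis
  qed
  have aV: "0 \<in> V" unfolding V_def using twom_A[of 0 \<alpha>] by simp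
  have bV: "2 * i \<in> V" unfolding V_def using twom_A[of i \<alpha>] i by simp
  have "k \<le> 2 * crossing_number E N TE X + 2 * \<alpha>"
    by (rule lower_bound[OF D finV finE th aV bV _ winj wp]) (use i(3) in simp)
  then have "M + 1 \<le> ecrw \<alpha> V E" using cn unfolding k_def by simp
  with h1 h2 show False by simp
qed


end
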